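(* Let $G$ be the two-dimensional $m\times n$ grid graph (the Cartesian product of a path on $m$ nodes and a path on $n$ nodes) with $m,n\ge 2$ and $mn>4$. Then $G$ does not have real sign rank $2$ (indeed there is no $\mathbf{Z}\in\mathbb{R}^{mn\times 2}$ with $\operatorname{sign}(A_{ij})=\operatorname{sign}((\mathbf{Z}\mathbf{Z}^\top)_{ij})$ for all $i\neq j$, where $\mathbf{A}$ is the adjacency matrix of $G$).
   Context: $\operatorname{sign}:\mathbb{R}\to\{+,-\}$ takes the value $-$ on $(-\infty,0]$ and $+$ on $(0,\infty)$. Diagonal entries of adjacency matrices are ignored. The real sign rank of a graph with adjacency $\mathbf{A}\in\{0,1\}^{N\times N}$ is the minimal $f$ such that there exists $\mathbf{Z}\in\mathbb{R}^{N\times f}$ with $\operatorname{sign}(A_{ij})=\operatorname{sign}((\mathbf{Z}\mathbf{Z}^\top)_{ij})$ for all $i\neq j$. *)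

theory Defs
  imports "HOL-Analysis.Analysis"
begin

definition sgn_pos :: "real \<Rightarrow> bool" where
  "sgn_pos x \<longleftrightarrow> x > 0"

text \<open>A sign representation of dimension f: Z : V \<Rightarrow> (coordinate index < f \<Rightarrow> real),
  (Z Z^T)_{uv} = sum over k<f of Z u k * Z v k, signs agree off the diagonal.\<close>
definition sign_rep :: "'v set \<Rightarrow> ('v \<Rightarrow> 'v \<Rightarrow> bool) \<Rightarrow> nat \<Rightarrow> ('v \<Rightarrow> nat \<Rightarrow> real) \<Rightarrow> bool" where
  "sign_rep V adj f Z \<longleftrightarrow>
     (\<forall>u\<in>V. \<forall>v\<in>V. u \<noteq> v \<longrightarrow>
        (sgn_pos (if adj u v then 1 else 0) \<longleftrightarrow> sgn_pos (\<Sum>k<f. Z u k * Z v k)))"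

definition real_sign_rank :: "'v set \<Rightarrow> ('v \<Rightarrow> 'v \<Rightarrow> bool) \<Rightarrow> nat" where
  "real_sign_rank V adj = (LEAST f. \<exists>Z. sign_rep V adj f Z)"

definition grid_vertices :: "nat \<Rightarrow> nat \<Rightarrow> (nat \<times> nat) set" where
  "grid_vertices m n = {0..<m} \<times> {0..<n}"

definition grid_adj :: "nat \<times> nat \<Rightarrow> nat \<times> nat \<Rightarrow> bool" where
  "grid_adj p q \<longleftrightarrow>
     (fst p = fst q \<and> (snd p = snd q + 1 \<or> snd q = snd p + 1)) \<or>
     (snd p = snd q \<and> (fst p = fst q + 1 \<or> fst q = fst p + 1))"

end

theory Submission
  imports Defs
begin

lemma claw:
  fixes c0 c1 x0 x1 y0 y1 z0 z1 :: real
  assumes "c0*x0+c1*x1>0" "c0*y0+c1*y1>0" "c0*z0+c1*z1>0"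
    "x0*y0+x1*y1 \<le> 0" "x0*z0+x1*z1 \<le> 0" "y0*z0+y1*z1 \<le> 0"
  shows False
proof -
  define px where "px = c0*x0+c1*x1"
  define py where "py = c0*y0+c1*y1"
  define pz where "pz = c0*z0+c1*z1"
  define qx where "qx = c0*x1-c1*x0"
  define qy where "qy = c0*y1-c1*y0"
  define qz where "qz = c0*z1-c1*z0"
  have N: "c0*c0+c1*c1 \<ge> 0" by simp
  have e1: "px*py + qx*qy = (c0*c0+c1*c1)*(x0*y0+x1*y1)"
    unfolding px_def py_def qx_def qy_def by (simp add: algebra_simps)
  have e2: "px*pz + qx*qz = (c0*c0+c1*c1)*(x0*z0+x1*z1)"
    unfolding px_def pz_def qx_def qz_def by (simp add: algebra_simps)
  have e3: "py*pz + qy*qz = (c0*c0+c1*c1)*(y0*z0+y1*z1)"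
    unfolding pz_def py_def qz_def qy_def by (simp add: algebra_simps)
  have "px*py > 0" "px*pz > 0" "py*pz > 0" using assms(1-3) px_def py_def pz_def by auto
  moreover have "(c0*c0+c1*c1)*(x0*y0+x1*y1) \<le> 0" using N assms(4) mult_nonneg_nonpos by blast
  moreover have "(c0*c0+c1*c1)*(x0*z0+x1*z1) \<le> 0" using N assms(5) mult_nonneg_nonpos by blast
  moreover have "(c0*c0+c1*c1)*(y0*z0+y1*z1) \<le> 0" using N assms(6) mult_nonneg_nonpos by blast
  ultimately have a: "qx*qy < 0" and b: "qx*qz < 0" and c: "qy*qz < 0" using e1 e2 e3 by linarith+
  have "(qx*qy)*(qx*qz) > 0" using a b mult_neg_neg by blast
  hence "(qx*qy)*(qx*qz)*(qy*qz) < 0" using c mult_pos_neg by blast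
  moreover have "(qx*qy)*(qx*qz)*(qy*qz) = (qx*qy*qz)*(qx*qy*qz)" by (simp add: algebra_simps)
  ultimately show False by (metis not_square_less_zero)
qed

lemma sum2: "(\<Sum>k<2. Z u k * Z v k) = Z u 0 * Z v 0 + Z u 1 * Z v 1" for Z :: "'a \<Rightarrow> nat \<Rightarrow> real"
  by (simp add: numeral_2_eq_2)

lemma claw_rep:
  assumes "sign_rep V adj 2 Z" "c \<in> V" "x \<in> V" "y \<in> V" "z \<in> V"
    "c \<noteq> x" "c \<noteq> y" "c \<noteq> z" "x \<noteq> y" "x \<noteq> z" "y \<noteq> z"
    "adj c x" "adj c y" "adj c z" "\<not> adj x y" "\<not> adj x z" "\<not> adj y z"
  shows False
proof -
  have h: "\<And>u v. u \<in> V \<Longrightarrow> v \<in> V \<Longrightarrow> u \<noteq> v \<Longrightarrow> (adj u v \<longleftrightarrow> Z u 0 * Z v 0 + Z u 1 * Z v 1 > 0)"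
  proof -
    fix u v assume "u \<in> V" "v \<in> V" "u \<noteq> v"
    hence "(0 < (if adj u v then 1 else (0::real))) = (0 < (\<Sum>k<2. Z u k * Z v k))"
      using assms(1) unfolding sign_rep_def sgn_pos_def by blast
    thus "(adj u v \<longleftrightarrow> Z u 0 * Z v 0 + Z u 1 * Z v 1 > 0)" unfolding sum2 by (cases "adj u v") auto
  qed
  show False
    apply (rule claw[of "Z c 0" "Z x 0" "Z c 1" "Z x 1" "Z y 0" "Z y 1" "Z z 0" "Z z 1"])
    using h[of c x] h[of c y] h[of c z] h[of x y] h[of x z] h[of y z] assms by auto
qed

lemma no_rep:
  fixes m n :: nat
  assumes "m \<ge> 2" and "n \<ge> 2" and "m * n > 4"
  shows "\<not> (\<exists>Z. sign_rep (grid_vertices m n) grid_adj 2 Z)"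
proof
  assume "\<exists>Z. sign_rep (grid_vertices m n) grid_adj 2 Z"
  then obtain Z where Z: "sign_rep (grid_vertices m n) grid_adj 2 Z" by blast
  have "n \<ge> 3 \<or> m \<ge> 3"
  proof (rule ccontr)
    assume "\<not> ?thesis"
    hence "m = 2" "n = 2" using assms by auto
    thus False using assms by simp
  qed
  thus False
  proof
    assume "n \<ge> 3"
    show False
      by (rule claw_rep[OF Z, of "(0,1)" "(0,0)" "(0,2)" "(1,1)"])
        (use \<open>n \<ge> 3\<close> assms in \<open>auto simp: grid_vertices_def grid_adj_def\<close>)
  next
    assume "m \<ge> 3"
    show False
      by (rule claw_rep[OF Z, of "(1,0)" "(0,0)" "(2,0)" "(1,1)"])
        (use \<open>m \<ge> 3\<close> assms in \<open>auto simp: grid_vertices_def grid_adj_def\<close>)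
  qed
qed

definition dec :: "nat \<Rightarrow> nat \<Rightarrow> nat \<times> nat" where
  "dec n k = ((k div 2) div n, (k div 2) mod n)"

definition ZZ :: "nat \<Rightarrow> nat \<times> nat \<Rightarrow> nat \<Rightarrow> real" where
  "ZZ n u k = (if u = dec n k \<or> (k mod 2 = 0 \<and> u = (fst (dec n k), snd (dec n k) + 1))
       \<or> (k mod 2 = 1 \<and> u = (fst (dec n k) + 1, snd (dec n k))) then 1 else 0)"

lemma enc_dec:
  assumes "j < n" "d < 2"
  shows "dec n (2 * (i * n + j) + d) = (i, j)" "(2 * (i * n + j) + d) mod 2 = d"
proof -
  have "(2 * (i * n + j) + d) div 2 = i * n + j" using assms by simp
  moreover have "(i * n + j) div n = i" "(i * n + j) mod n = j" using assms by auto
  ultimately show "dec n (2 * (i * n + j) + d) = (i, j)" by (simp add: dec_def)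
  have "(2 * (i * n + j) + d) mod 2 = d mod 2" by (simp only: mod_mult_self4)
  thus "(2 * (i * n + j) + d) mod 2 = d" using assms by simp
qed

lemma some_rep:
  fixes m n :: nat
  shows "sign_rep (grid_vertices m n) grid_adj (2*m*n) (ZZ n)"
  unfolding sign_rep_def sgn_pos_def
proof (intro ballI impI)
  fix u v assume u: "u \<in> grid_vertices m n" and v: "v \<in> grid_vertices m n" and uv: "u \<noteq> v"
  have nn: "\<And>k. ZZ n u k * ZZ n v k \<ge> 0" by (simp add: ZZ_def)
  show "(0 < (if grid_adj u v then 1 else 0::real)) = (0 < (\<Sum>k<2 * m * n. ZZ n u k * ZZ n v k))"
  proof (cases "grid_adj u v")
    case True
    obtain a and d :: nat where ad: "d < 2" "fst a < m" "snd a < n"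
      "{u, v} = {a, if d = 0 then (fst a, snd a + 1) else (fst a + 1, snd a)}"
    proof -
      obtain i j i' j' where uu: "u = (i,j)" and vv: "v = (i',j')" by fastforce
      have b: "i < m" "j < n" "i' < m" "j' < n" using u v uu vv by (auto simp: grid_vertices_def)
      show ?thesis using True uu vv b that[of 0 "(i,j)"] that[of 0 "(i',j')"]
          that[of 1 "(i,j)"] that[of 1 "(i',j')"]
        unfolding grid_adj_def by auto
    qed
    define k where "k = 2 * (fst a * n + snd a) + d"
    have kd: "dec n k = a" "k mod 2 = d" using enc_dec[of "snd a" n d "fst a"] ad by (auto simp: k_def)
    have "k < 2*m*n"
    proof -
      have "fst a * n + snd a < m * n"
      proof -
        have "fst a * n + snd a < fst a * n + n" using ad by simp
        also have "\<dots> = (fst a + 1) * n" by simp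
        also have "\<dots> \<le> m * n" using ad by (intro mult_right_mono) auto
        finally show ?thesis .
      qed
      thus ?thesis using ad unfolding k_def by simp
    qed
    moreover have "ZZ n u k * ZZ n v k > 0"
      using ad(1,4) kd uv unfolding ZZ_def by (cases "d = 0") (auto simp: doubleton_eq_iff)
    ultimately have "0 < (\<Sum>k<2 * m * n. ZZ n u k * ZZ n v k)"
      by (intro sum_pos2[where i=k]) (auto simp: nn)
    thus ?thesis using True by simp
  next
    case False
    have z: "ZZ n u k * ZZ n v k = 0" for k
    proof (rule ccontr)
      assume "ZZ n u k * ZZ n v k \<noteq> 0"
      hence "ZZ n u k = 1" "ZZ n v k = 1" by (auto simp: ZZ_def split: if_splits)
      thus False using False uv unfolding ZZ_def grid_adj_def
        by (auto split: if_splits)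
    qed
    have "(\<Sum>k<2*m*n. ZZ n u k * ZZ n v k) = 0" by (rule sum.neutral) (use z in blast)
    thus ?thesis using False by simp
  qed
qed

theorem theorem2:
  fixes m n :: nat
  assumes "m \<ge> 2" and "n \<ge> 2" and "m * n > 4"
  shows "real_sign_rank (grid_vertices m n) grid_adj \<noteq> 2
       \<and> \<not> (\<exists>Z. sign_rep (grid_vertices m n) grid_adj 2 Z)"
proof -
  have nr: "\<not> (\<exists>Z. sign_rep (grid_vertices m n) grid_adj 2 Z)" using no_rep assms by blast
  have "\<exists>Z. sign_rep (grid_vertices m n) grid_adj (real_sign_rank (grid_vertices m n) grid_adj) Z"
    unfolding real_sign_rank_def by (rule LeastI_ex) (use some_rep in blast)
  thus ?thesis using nr by metis
qed

end
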